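(* Let $k\ge 1$ and let $A_1,\dots,A_{2k-1}$ be balanced parenthesis sequences inducing ordered matchings $M_1,\dots,M_{2k-1}$ respectively. Define $B_k=(A_k)$ and, for $j=k-1,\dots,1$, $B_j=(A_j\,B_{j+1}\,A_{2k-j})$, so that $B_1=(A_1(A_2(\cdots(A_{k-1}(A_k)A_{k+1})\cdots)A_{2k-2})A_{2k-1})$, and let $M$ be the parenthesis matching induced by $B_1$. Let $l=\sum_{i\ne k} r_<(M_i,K_3)$ and $t=r_<(M_k,K_3)$, and let $|M_k|$ denote the number of vertices of $M_k$. Then $$r_<(M,K_3)\le t+20\big(k+l+|M_k|\big).$$
   Context: An ordered graph on $[N]$ is a graph with vertex set $\{1,\dots,N\}$ equipped with the natural order. Given a red/blue coloring of the edges of the complete graph on $[N]$, a red (ordered) copy of an ordered graph $G$ on $[p]$ is a strictly increasing map $\varphi:[p]\to[N]$ such that $\varphi(u)\varphi(v)$ is red for every edge $uv$ of $G$. The ordered Ramsey number $r_<(G,K_3)$ is the smallest $N$ such that every red/blue coloring of the edges of the complete graph on $[N]$ contains either a red ordered copy of $G$ or a blue triangle. A balanced parenthesis sequence of length $2m$ is a correctly matched string of $m$ open and $m$ close parentheses (possibly empty); it induces the ordered matching on $[2m]$ whose edges are the pairs $\{i,j\}$ such that the parenthesis at position $i$ is an open parenthesis matched with the close parenthesis at position $j$. *)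

theory Defs
  imports Main
begin

text \<open>Parenthesis sequences are lists of booleans: True = open, False = close.
  Positions are 1-indexed: position i of xs is xs ! (i - 1).\<close>

inductive balanced :: "bool list \<Rightarrow> bool" where
  bal_Nil: "balanced []"
| bal_step: "balanced A \<Longrightarrow> balanced B \<Longrightarrow> balanced (True # A @ False # B)"

text \<open>The ordered matching induced by a parenthesis sequence: i < j is an edge iff
  position i is an open parenthesis matched with the close parenthesis at position j
  (equivalently, the sequence strictly between them is balanced).\<close>
definition paren_edge :: "bool list \<Rightarrow> nat \<Rightarrow> nat \<Rightarrow> bool" where
  "paren_edge xs i j \<longleftrightarrow> 1 \<le> i \<and> i < j \<and> j \<le> length xs \<and>
     xs ! (i - 1) \<and> \<not> xs ! (j - 1) \<and> balanced (take (j - i - 1) (drop i xs))"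

text \<open>Red ordered copy of the ordered graph on [p] with edge relation E (E u v for u < v),
  in the colouring red of pairs of [N] (red a b read only for a < b).\<close>
definition red_copy :: "nat \<Rightarrow> (nat \<Rightarrow> nat \<Rightarrow> bool) \<Rightarrow> nat \<Rightarrow> (nat \<Rightarrow> nat \<Rightarrow> bool) \<Rightarrow> bool" where
  "red_copy p E N red \<longleftrightarrow> (\<exists>\<phi>. strict_mono_on {1..p} \<phi> \<and> \<phi> ` {1..p} \<subseteq> {1..N} \<and>
     (\<forall>u v. 1 \<le> u \<and> u < v \<and> v \<le> p \<and> E u v \<longrightarrow> red (\<phi> u) (\<phi> v)))"

definition blue_triangle :: "nat \<Rightarrow> (nat \<Rightarrow> nat \<Rightarrow> bool) \<Rightarrow> bool" where
  "blue_triangle N red \<longleftrightarrow> (\<exists>a b c. 1 \<le> a \<and> a < b \<and> b < c \<and> c \<le> N \<and>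
     \<not> red a b \<and> \<not> red a c \<and> \<not> red b c)"

definition ord_ramsey_K3 :: "nat \<Rightarrow> (nat \<Rightarrow> nat \<Rightarrow> bool) \<Rightarrow> nat" where
  "ord_ramsey_K3 p E = (LEAST N. \<forall>red. red_copy p E N red \<or> blue_triangle N red)"

definition paren_ramsey :: "bool list \<Rightarrow> nat" where
  "paren_ramsey xs = ord_ramsey_K3 (length xs) (paren_edge xs)"

text \<open>nest A k d = B_{k-d}: nest A k 0 = (A_k),
  nest A k (d+1) = (A_{k-d-1} nest A k d A_{k+d+1}).\<close>
fun nest :: "(nat \<Rightarrow> bool list) \<Rightarrow> nat \<Rightarrow> nat \<Rightarrow> bool list" where
  "nest A k 0 = True # A k @ [False]"
| "nest A k (Suc d) = True # A (k - Suc d) @ nest A k d @ A (k + Suc d) @ [False]"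

end

theory Submission
  imports Defs
begin


fun ht :: "bool list \<Rightarrow> int" where
  "ht [] = 0"
| "ht (x # xs) = (if x then 1 else -1) + ht xs"

lemma ht_append[simp]: "ht (xs @ ys) = ht xs + ht ys"
  by (induction xs) auto

lemma bal_ht: "balanced xs \<Longrightarrow> ht xs = 0 \<and> (\<forall>n. 0 \<le> ht (take n xs))"
proof (induction rule: balanced.induct)
  case bal_Nil
  then show ?case by simp
next
  case (bal_step A B)
  have "0 \<le> ht (take n (True # A @ False # B))" for n
  proof (cases n)
    case 0 then show ?thesis by simp
  next
    case (Suc m)
    show ?thesis
    proof (cases "m \<le> length A")
      case True
      then show ?thesis using Suc bal_step by (simp add: take_append)
    next
      case False
      then obtain r where r: "m - length A = Suc r" by (metis Suc_diff_Suc not_le)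
      have "take m A = A" using False by simp
      then show ?thesis using Suc bal_step r by (simp add: take_append)
    qed
  qed
  then show ?case using bal_step by simp
qed

lemma bal_append: "balanced U \<Longrightarrow> balanced V \<Longrightarrow> balanced (U @ V)"
  by (induction rule: balanced.induct) (auto intro: balanced.intros)

lemma bal_wrap: "balanced C \<Longrightarrow> balanced (True # C @ [False])"
  using bal_step[OF _ bal_Nil] by simp

lemma ht_take_open:
  assumes "i \<ge> 1" "i \<le> length U" "U ! (i - 1)" "balanced U"
  shows "ht (take i U) \<ge> 1"
proof -
  have "take i U = take (i - 1) U @ [U ! (i - 1)]"
    using assms take_Suc_conv_app_nth[of "i - 1" U] by simp
  then have "ht (take i U) = ht (take (i - 1) U) + 1" using assms by simp
  moreover have "ht (take (i - 1) U) \<ge> 0" using bal_ht[OF assms(4)] by blast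
  ultimately show ?thesis by simp
qed



lemma edge_append:
  assumes bU: "balanced U" and bV: "balanced V" and e: "paren_edge (U @ V) i j"
  shows "(j \<le> length U \<and> paren_edge U i j) \<or>
         (length U < i \<and> paren_edge V (i - length U) (j - length U))"
proof -
  from e have i1: "1 \<le> i" and ij: "i < j" and jl: "j \<le> length U + length V"
    and oi: "(U @ V) ! (i - 1)" and cj: "\<not> (U @ V) ! (j - 1)"
    and w: "balanced (take (j - i - 1) (drop i (U @ V)))"
    unfolding paren_edge_def by auto
  consider "j \<le> length U" | "length U < i" | "i \<le> length U" "length U < j" by linarith
  then show ?thesis
  proof cases
    case 1
    have "j - 1 < length U" "i - 1 < length U" using 1 ij i1 by auto
    then have "paren_edge U i j"
      using i1 ij oi cj w 1 unfolding paren_edge_def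
      by (simp add: nth_append less_imp_diff_less)
    then show ?thesis using 1 by simp
  next
    case 2
    have d: "drop i (U @ V) = drop (i - length U) V" using 2 by simp
    have "\<not> i - 1 < length U" "\<not> j - 1 < length U" "1 \<le> i - length U"
      "i - length U < j - length U" "j - length U \<le> length V" using 2 ij jl by auto
    then have "paren_edge V (i - length U) (j - length U)"
      using 2 i1 ij jl oi cj w unfolding paren_edge_def d
      by (simp add: nth_append)
    then show ?thesis using 2 by simp
  next
    case 3
    let ?w = "take (j - i - 1) (drop i (U @ V))"
    have "take (length U - i) ?w = drop i U"
      using 3 by (simp add: min_def)
    then have "0 \<le> ht (drop i U)" using bal_ht[OF w] by metis
    moreover have "ht U = ht (take i U) + ht (drop i U)"
      by (metis append_take_drop_id ht_append)
    moreover have "ht (take i U) \<ge> 1"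
      using ht_take_open[OF i1 3(1) _ bU] oi 3 i1 by (simp add: nth_append)
    ultimately show ?thesis using bal_ht[OF bU] by simp
  qed
qed

lemma edge_wrap:
  assumes bC: "balanced C" and e: "paren_edge (True # C @ [False]) i j"
  shows "(i = 1 \<and> j = length C + 2) \<or>
         (2 \<le> i \<and> j \<le> length C + 1 \<and> paren_edge C (i - 1) (j - 1))"
proof -
  let ?xs = "True # C @ [False]"
  from e have i1: "1 \<le> i" and ij: "i < j" and jl: "j \<le> length C + 2"
    and oi: "?xs ! (i - 1)" and cj: "\<not> ?xs ! (j - 1)"
    and w: "balanced (take (j - i - 1) (drop i ?xs))"
    unfolding paren_edge_def by auto
  show ?thesis
  proof (cases "i = 1")
    case True
    show ?thesis
    proof (cases "j = length C + 2")
      case True then show ?thesis using \<open>i = 1\<close> by simp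
    next
      case False
      then have j2: "j \<le> length C + 1" using jl by simp
      have j2': "2 \<le> j" using ij True by simp
      obtain m where m: "j = m + 2" using j2' by (auto dest: le_Suc_ex simp: add.commute)
      have mC: "m < length C" using j2 m by simp
      have "?xs ! (j - 1) = C ! m" using m mC by (simp add: nth_append)
      then have cjj: "\<not> C ! (j - 2)" using cj m by simp
      have "take (j - i - 1) (drop i ?xs) = take (j - 2) C"
        using True j2 j2' by (simp add: take_append numeral_2_eq_2)
      then have "ht (take (j - 2) C) = 0" using bal_ht[OF w] by simp
      moreover have "take (j - 1) C = take (j - 2) C @ [C ! (j - 2)]"
        using mC m take_Suc_conv_app_nth[of m C] by simp
      ultimately have "ht (take (j - 1) C) = -1" using cjj by simp
      then show ?thesis using bal_ht[OF bC] by (metis linorder_not_le neg_less_0_iff_less zero_less_one)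
    qed
  next
    case False
    then have i2: "2 \<le> i" using i1 by simp
    obtain mi where mi: "i = mi + 2" using i2 by (auto dest: le_Suc_ex simp: add.commute)
    have oii: "C ! (i - 2)" using oi i2 ij jl mi
      by (auto simp: nth_append split: if_splits)
    show ?thesis
    proof (cases "j = length C + 2")
      case True
      have "drop i ?xs = drop (i - 1) C @ [False]"
        using i2 ij True by (cases i) auto
      then have "take (j - i - 1) (drop i ?xs) = drop (i - 1) C"
        using True i2 by simp
      then have "ht (drop (i - 1) C) = 0" using bal_ht[OF w] by simp
      moreover have "ht C = ht (take (i - 1) C) + ht (drop (i - 1) C)"
        by (metis append_take_drop_id ht_append)
      moreover have "ht (take (i - 1) C) \<ge> 1"
        using ht_take_open[of "i - 1" C] bC oii i2 ij True mi by simp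
      ultimately show ?thesis using bal_ht[OF bC] by simp
    next
      case False
      then have j1: "j \<le> length C + 1" using jl by simp
      obtain mj where mj: "j = mj + 2" using i2 ij by (metis le_Suc_ex add.commute less_imp_le order_trans)
      have cjj: "\<not> C ! (j - 2)" using cj j1 ij i2 mj
        by (simp add: nth_append)
      have "drop i ?xs = drop (i - 1) (C @ [False])" using i2 by (cases i) auto
      also have "\<dots> = drop (i - 1) C @ [False]" using j1 ij by simp
      finally have dd: "drop i ?xs = drop (i - 1) C @ [False]" .
      have "take (j - i - 1) (drop i ?xs) = take (j - i - 1) (drop (i - 1) C)"
        unfolding dd using j1 i2 ij by (simp add: take_append)
      with w have "balanced (take (j - i - 1) (drop (i - 1) C))" by (simp only:)
      then have wb: "balanced (take (mj - mi - 1) (drop (mi + 1) C))"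
        using mi mj by simp
      have "C ! mi" "\<not> C ! mj" using oii cjj mi mj by auto
      then have "paren_edge C (i - 1) (j - 1)"
        using wb mi mj ij j1 unfolding paren_edge_def by simp
      then show ?thesis using i2 j1 by simp
    qed
  qed
qed



definition emb :: "bool list \<Rightarrow> nat \<Rightarrow> nat \<Rightarrow> (nat \<Rightarrow> nat \<Rightarrow> bool) \<Rightarrow> bool" where
  "emb xs a b red \<longleftrightarrow> (\<exists>\<phi>. strict_mono_on {1..length xs} \<phi> \<and> \<phi> ` {1..length xs} \<subseteq> {a..b} \<and>
     (\<forall>u v. 1 \<le> u \<and> u < v \<and> v \<le> length xs \<and> paren_edge xs u v \<longrightarrow> red (\<phi> u) (\<phi> v)))"

lemma emb_red_copy: "emb xs 1 N red \<longleftrightarrow> red_copy (length xs) (paren_edge xs) N red"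
  unfolding emb_def red_copy_def by simp

lemma emb_mono: "emb xs a b red \<Longrightarrow> a' \<le> a \<Longrightarrow> b \<le> b' \<Longrightarrow> emb xs a' b' red"
  unfolding emb_def by (meson atLeastatMost_subset_iff order_trans)

lemma emb_concat:
  assumes bU: "balanced U" and bV: "balanced V"
    and eU: "emb U a c red" and eV: "emb V c' d red"
    and "c < c'" "a \<le> c'" "c \<le> d"
  shows "emb (U @ V) a d red"
proof -
  obtain f where f: "strict_mono_on {1..length U} f" "f ` {1..length U} \<subseteq> {a..c}"
    "\<forall>u v. 1 \<le> u \<and> u < v \<and> v \<le> length U \<and> paren_edge U u v \<longrightarrow> red (f u) (f v)"
    using eU unfolding emb_def by blast
  obtain g where g: "strict_mono_on {1..length V} g" "g ` {1..length V} \<subseteq> {c'..d}"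
    "\<forall>u v. 1 \<le> u \<and> u < v \<and> v \<le> length V \<and> paren_edge V u v \<longrightarrow> red (g u) (g v)"
    using eV unfolding emb_def by blast
  define h where "h i = (if i \<le> length U then f i else g (i - length U))" for i
  have hf: "i \<in> {1..length U} \<Longrightarrow> h i \<in> {a..c}" for i using f(2) unfolding h_def by (auto simp: image_subset_iff)
  have hg: "i \<in> {length U + 1..length U + length V} \<Longrightarrow> h i \<in> {c'..d}" for i
  proof -
    assume i: "i \<in> {length U + 1..length U + length V}"
    then have "i - length U \<in> {1..length V}" by auto
    then have "g (i - length U) \<in> {c'..d}" using g(2) by blast
    then show ?thesis using i unfolding h_def by auto
  qed
  have "strict_mono_on {1..length (U @ V)} h"
  proof (rule strict_mono_onI)
    fix r s assume r: "r \<in> {1..length (U @ V)}" and s: "s \<in> {1..length (U @ V)}" and rs: "r < s"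
    consider "s \<le> length U" | "length U < r" | "r \<le> length U" "length U < s" by linarith
    then show "h r < h s"
    proof cases
      case 1 then show ?thesis using f(1) r s rs unfolding h_def
        by (auto intro: strict_mono_onD)
    next
      case 2
      then have "g (r - length U) < g (s - length U)"
        using g(1) r s rs by (intro strict_mono_onD[OF g(1)]) auto
      then show ?thesis using 2 rs unfolding h_def by auto
    next
      case 3
      have "h r \<le> c" using hf[of r] 3 r by auto
      moreover have "c' \<le> h s" using hg[of s] 3 s by auto
      ultimately show ?thesis using \<open>c < c'\<close> by linarith
    qed
  qed
  moreover have "h ` {1..length (U @ V)} \<subseteq> {a..d}"
  proof
    fix z assume "z \<in> h ` {1..length (U @ V)}"
    then obtain i where i: "i \<in> {1..length (U @ V)}" "z = h i" by blast
    show "z \<in> {a..d}"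
    proof (cases "i \<le> length U")
      case True then show ?thesis using hf[of i] i assms by auto
    next
      case False then show ?thesis using hg[of i] i assms by auto
    qed
  qed
  moreover have "\<forall>u v. 1 \<le> u \<and> u < v \<and> v \<le> length (U @ V) \<and> paren_edge (U @ V) u v
      \<longrightarrow> red (h u) (h v)"
  proof (intro allI impI)
    fix u v assume uv: "1 \<le> u \<and> u < v \<and> v \<le> length (U @ V) \<and> paren_edge (U @ V) u v"
    from edge_append[OF bU bV] uv
    have "(v \<le> length U \<and> paren_edge U u v) \<or>
         (length U < u \<and> paren_edge V (u - length U) (v - length U))" by blast
    then show "red (h u) (h v)"
    proof
      assume "v \<le> length U \<and> paren_edge U u v"
      then show ?thesis using f(3) uv unfolding h_def by auto
    next
      assume A: "length U < u \<and> paren_edge V (u - length U) (v - length U)"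
      have "1 \<le> u - length U" "u - length U < v - length U" "v - length U \<le> length V"
        using A uv by auto
      then have "red (g (u - length U)) (g (v - length U))"
        using g(3) A by blast
      then show ?thesis using A uv unfolding h_def by auto
    qed
  qed
  ultimately show ?thesis unfolding emb_def by blast
qed

lemma emb_wrap:
  assumes bC: "balanced C" and eC: "emb C a' b' red"
    and "a < a'" "b' < b" "a < b" "red a b"
  shows "emb (True # C @ [False]) a b red"
proof -
  obtain f where f: "strict_mono_on {1..length C} f" "f ` {1..length C} \<subseteq> {a'..b'}"
    "\<forall>u v. 1 \<le> u \<and> u < v \<and> v \<le> length C \<and> paren_edge C u v \<longrightarrow> red (f u) (f v)"
    using eC unfolding emb_def by blast
  define h where "h i = (if i = 1 then a else if i = length C + 2 then b else f (i - 1))" for i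
  have hm: "2 \<le> i \<Longrightarrow> i \<le> length C + 1 \<Longrightarrow> h i = f (i - 1) \<and> a < h i \<and> h i < b" for i
  proof -
    assume "2 \<le> i" "i \<le> length C + 1"
    then have "i - 1 \<in> {1..length C}" by auto
    then have "f (i - 1) \<in> {a'..b'}" using f(2) by blast
    then show ?thesis using \<open>2 \<le> i\<close> \<open>i \<le> length C + 1\<close> assms unfolding h_def by auto
  qed
  have "strict_mono_on {1..length (True # C @ [False])} h"
  proof (rule strict_mono_onI)
    fix r s assume r: "r \<in> {1..length (True # C @ [False])}" and s: "s \<in> {1..length (True # C @ [False])}" and rs: "r < s"
    show "h r < h s"
    proof (cases "r = 1")
      case True
      then have "h r = a" unfolding h_def by simp
      moreover have "a < h s"
      proof (cases "s = length C + 2")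
        case True then show ?thesis using assms rs \<open>r = 1\<close> unfolding h_def by auto
      next
        case False then show ?thesis using hm[of s] s rs \<open>r = 1\<close> by auto
      qed
      ultimately show ?thesis by simp
    next
      case False
      then have r2: "2 \<le> r" "r \<le> length C + 1" using r rs s by auto
      show ?thesis
      proof (cases "s = length C + 2")
        case True then show ?thesis using hm[OF r2] unfolding h_def by auto
      next
        case False
        then have s2: "2 \<le> s" "s \<le> length C + 1" using s rs r2 by auto
        have "f (r - 1) < f (s - 1)" using r2 s2 rs by (intro strict_mono_onD[OF f(1)]) auto
        then show ?thesis using hm[OF r2] hm[OF s2] by simp
      qed
    qed
  qed
  moreover have "h ` {1..length (True # C @ [False])} \<subseteq> {a..b}"
  proof
    fix z assume "z \<in> h ` {1..length (True # C @ [False])}"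
    then obtain i where i: "i \<in> {1..length C + 2}" "z = h i" by auto
    show "z \<in> {a..b}"
    proof (cases "i = 1 \<or> i = length C + 2")
      case True then show ?thesis using i assms unfolding h_def by auto
    next
      case False then show ?thesis using hm[of i] i by auto
    qed
  qed
  moreover have "\<forall>u v. 1 \<le> u \<and> u < v \<and> v \<le> length (True # C @ [False]) \<and>
      paren_edge (True # C @ [False]) u v \<longrightarrow> red (h u) (h v)"
  proof (intro allI impI)
    fix u v assume uv: "1 \<le> u \<and> u < v \<and> v \<le> length (True # C @ [False]) \<and> paren_edge (True # C @ [False]) u v"
    from edge_wrap[OF bC] uv
    have "(u = 1 \<and> v = length C + 2) \<or> (2 \<le> u \<and> v \<le> length C + 1 \<and> paren_edge C (u - 1) (v - 1))"
      by blast
    then show "red (h u) (h v)"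
    proof
      assume "u = 1 \<and> v = length C + 2"
      then show ?thesis using assms unfolding h_def by auto
    next
      assume A: "2 \<le> u \<and> v \<le> length C + 1 \<and> paren_edge C (u - 1) (v - 1)"
      have "1 \<le> u - 1" "u - 1 < v - 1" "v - 1 \<le> length C" using A uv by auto
      then have "red (f (u - 1)) (f (v - 1))" using f(3) A by blast
      then show ?thesis using hm[of u] hm[of v] A uv by auto
    qed
  qed
  ultimately show ?thesis unfolding emb_def by blast
qed



lemma clique_map:
  fixes K :: "nat set"
  assumes "finite K" "p \<le> card K"
  shows "\<exists>\<phi>. strict_mono_on {1..p} \<phi> \<and> \<phi> ` {1..p} \<subseteq> K"
proof -
  let ?ks = "sorted_list_of_set K"
  define \<phi> where "\<phi> i = ?ks ! (i - 1)" for i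
  have len: "length ?ks = card K" by simp
  have sw: "sorted_wrt (<) ?ks" by simp
  have "strict_mono_on {1..p} \<phi>"
  proof (rule strict_mono_onI)
    fix r s assume "r \<in> {1..p}" "s \<in> {1..p}" "r < s"
    then show "\<phi> r < \<phi> s" unfolding \<phi>_def using sorted_wrt_nth_less[OF sw, of "r - 1" "s - 1"] len assms
      by auto
  qed
  moreover have "\<phi> ` {1..p} \<subseteq> K"
  proof
    fix z assume "z \<in> \<phi> ` {1..p}"
    then obtain i where "i \<in> {1..p}" "z = \<phi> i" by blast
    then have "i - 1 < length ?ks" using len assms by auto
    then have "?ks ! (i - 1) \<in> set ?ks" by (rule nth_mem)
    then show "z \<in> K" using \<open>z = \<phi> i\<close> assms unfolding \<phi>_def by simp
  qed
  ultimately show ?thesis by blast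
qed

lemma red_copy_clique:
  assumes "finite K" "K \<subseteq> {1..N}" "p \<le> card K" "\<forall>x\<in>K. \<forall>y\<in>K. x < y \<longrightarrow> red x y"
  shows "red_copy p E N red"
proof -
  obtain \<phi> where \<phi>: "strict_mono_on {1..p} \<phi>" "\<phi> ` {1..p} \<subseteq> K" using clique_map[OF assms(1,3)] by blast
  have "\<forall>u v. 1 \<le> u \<and> u < v \<and> v \<le> p \<and> E u v \<longrightarrow> red (\<phi> u) (\<phi> v)"
  proof (intro allI impI)
    fix u v assume uv: "1 \<le> u \<and> u < v \<and> v \<le> p \<and> E u v"
    then have "\<phi> u < \<phi> v" using \<phi>(1) by (intro strict_mono_onD[OF \<phi>(1)]) auto
    moreover have "\<phi> u \<in> K" "\<phi> v \<in> K" using \<phi>(2) uv by auto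
    ultimately show "red (\<phi> u) (\<phi> v)" using assms(4) by blast
  qed
  moreover have "\<phi> ` {1..p} \<subseteq> {1..N}" using \<phi>(2) assms(2) by blast
  ultimately show ?thesis unfolding red_copy_def using \<phi>(1) by blast
qed

lemma emb_clique:
  assumes "finite K" "K \<subseteq> {a..b}" "length xs \<le> card K" "\<forall>x\<in>K. \<forall>y\<in>K. x < y \<longrightarrow> red x y"
  shows "emb xs a b red"
proof -
  obtain \<phi> where \<phi>: "strict_mono_on {1..length xs} \<phi>" "\<phi> ` {1..length xs} \<subseteq> K"
    using clique_map[OF assms(1,3)] by blast
  have "\<forall>u v. 1 \<le> u \<and> u < v \<and> v \<le> length xs \<and> paren_edge xs u v \<longrightarrow> red (\<phi> u) (\<phi> v)"
  proof (intro allI impI)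
    fix u v assume uv: "1 \<le> u \<and> u < v \<and> v \<le> length xs \<and> paren_edge xs u v"
    then have "\<phi> u < \<phi> v" using \<phi>(1) by (intro strict_mono_onD[OF \<phi>(1)]) auto
    moreover have "\<phi> u \<in> K" "\<phi> v \<in> K" using \<phi>(2) uv by auto
    ultimately show "red (\<phi> u) (\<phi> v)" using assms(4) by blast
  qed
  moreover have "\<phi> ` {1..length xs} \<subseteq> {a..b}" using \<phi>(2) assms(2) by blast
  ultimately show ?thesis unfolding emb_def using \<phi>(1) by blast
qed

lemma clique_ex:
  assumes nb: "\<not> blue_triangle N red"
  shows "finite S \<Longrightarrow> S \<subseteq> {1..N} \<Longrightarrow> m * p \<le> card S \<Longrightarrow>
    \<exists>K\<subseteq>S. (m \<le> card K \<or> p \<le> card K) \<and> (\<forall>x\<in>K. \<forall>y\<in>K. x < y \<longrightarrow> red x y)"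
proof (induction m arbitrary: S)
  case 0
  then show ?case by (intro exI[of _ "{}"]) auto
next
  case (Suc m)
  show ?case
  proof (cases "p = 0")
    case True then show ?thesis by (intro exI[of _ "{}"]) auto
  next
    case False
    then have "0 < card S" using Suc.prems(3) by (metis mult_is_0 nat.distinct(1) le_0_eq not_gr0)
    then have "S \<noteq> {}" by auto
    define v where "v = Min S"
    have vS: "v \<in> S" using Suc.prems \<open>S \<noteq> {}\<close> unfolding v_def by simp
    have vmin: "\<And>w. w \<in> S \<Longrightarrow> v \<le> w" using Suc.prems unfolding v_def by simp
    define B where "B = {w \<in> S. v < w \<and> \<not> red v w}"
    have finB: "finite B" using Suc.prems unfolding B_def by simp
    show ?thesis
    proof (cases "p \<le> card B")
      case True
      have "\<forall>x\<in>B. \<forall>y\<in>B. x < y \<longrightarrow> red x y"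
      proof (intro ballI impI)
        fix x y assume "x \<in> B" "y \<in> B" "x < y"
        show "red x y"
        proof (rule ccontr)
          assume "\<not> red x y"
          moreover have "1 \<le> v" "y \<le> N" using vS \<open>y \<in> B\<close> Suc.prems unfolding B_def by auto
          moreover have "v < x" "\<not> red v x" "\<not> red v y" using \<open>x \<in> B\<close> \<open>y \<in> B\<close> unfolding B_def by auto
          ultimately have "blue_triangle N red" using \<open>x < y\<close>
            unfolding blue_triangle_def by (intro exI[of _ v] exI[of _ x] exI[of _ y]) simp
          then show False using nb by simp
        qed
      qed
      moreover have "B \<subseteq> S" unfolding B_def by auto
      ultimately show ?thesis using True by blast
    next
      case False
      define S' where "S' = S - {v} - B"
      have finS': "finite S'" using Suc.prems unfolding S'_def by simp
      have "card S' = card (S - {v}) - card B"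
        unfolding S'_def by (rule card_Diff_subset) (use finB in \<open>auto simp: B_def\<close>)
      moreover have "card (S - {v}) = card S - 1" using vS Suc.prems by simp
      moreover have "card B < p" using False by simp
      moreover have "Suc m * p = m * p + p" by simp
      ultimately have "m * p \<le> card S'" using Suc.prems(3) by linarith
      moreover have "S' \<subseteq> {1..N}" using Suc.prems unfolding S'_def by auto
      ultimately have "\<exists>K\<subseteq>S'. (m \<le> card K \<or> p \<le> card K) \<and> (\<forall>x\<in>K. \<forall>y\<in>K. x < y \<longrightarrow> red x y)"
        using Suc.IH[OF finS'] by blast
      then obtain K where K: "K \<subseteq> S'" "m \<le> card K \<or> p \<le> card K"
        "\<forall>x\<in>K. \<forall>y\<in>K. x < y \<longrightarrow> red x y" by blast
      show ?thesis
      proof (cases "p \<le> card K")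
        case True then show ?thesis using K unfolding S'_def by blast
      next
        case False
        then have mK: "m \<le> card K" using K by simp
        have finK: "finite K" using K finS' finite_subset by blast
        have vK: "v \<notin> K" using K unfolding S'_def by auto
        have "\<forall>x\<in>insert v K. \<forall>y\<in>insert v K. x < y \<longrightarrow> red x y"
        proof (intro ballI impI)
          fix x y assume "x \<in> insert v K" "y \<in> insert v K" "x < y"
          show "red x y"
          proof (cases "x = v")
            case True
            then have "y \<in> K" using \<open>y \<in> insert v K\<close> \<open>x < y\<close> by auto
            then show ?thesis using True K(1) \<open>x < y\<close> unfolding S'_def B_def by auto
          next
            case False
            then have "x \<in> K" using \<open>x \<in> insert v K\<close> by auto
            moreover have "y \<noteq> v"
            proof
              assume "y = v"
              then have "x < v" using \<open>x < y\<close> by simp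
              moreover have "x \<in> S" using \<open>x \<in> K\<close> K(1) unfolding S'_def by auto
              ultimately show False using vmin[of x] by simp
            qed
            ultimately have "y \<in> K" using \<open>y \<in> insert v K\<close> by simp
            then show ?thesis using K(3) \<open>x \<in> K\<close> \<open>x < y\<close> by blast
          qed
        qed
        moreover have "insert v K \<subseteq> S" using K(1) vS unfolding S'_def by auto
        moreover have "Suc m \<le> card (insert v K)" using mK finK vK by simp
        ultimately show ?thesis by blast
      qed
    qed
  qed
qed

lemma ramsey_ex: "\<exists>n. \<forall>red. red_copy p E n red \<or> blue_triangle n red"
proof (intro exI allI)
  fix red
  show "red_copy p E (p * p) red \<or> blue_triangle (p * p) red"
  proof (cases "blue_triangle (p * p) red")
    case False
    obtain K where K: "K \<subseteq> {1..p * p}" "p \<le> card K" "\<forall>x\<in>K. \<forall>y\<in>K. x < y \<longrightarrow> red x y"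
      using clique_ex[OF False, of "{1..p*p}" p p] by auto
    have "finite K" using K(1) finite_subset by blast
    then show ?thesis using red_copy_clique K by blast
  qed simp
qed

definition PR :: "bool list \<Rightarrow> nat \<Rightarrow> bool" where
  "PR xs n \<longleftrightarrow> (\<forall>red. red_copy (length xs) (paren_edge xs) n red \<or> blue_triangle n red)"

lemma PR_least: "PR xs (paren_ramsey xs)"
  unfolding paren_ramsey_def ord_ramsey_K3_def PR_def
  by (rule LeastI_ex) (rule ramsey_ex)

lemma PR_le: "PR xs n \<Longrightarrow> paren_ramsey xs \<le> n"
  unfolding paren_ramsey_def ord_ramsey_K3_def PR_def by (rule Least_le)

lemma len_le_pr: "length xs \<le> paren_ramsey xs"
proof (rule ccontr)
  let ?n = "paren_ramsey xs"
  assume "\<not> length xs \<le> ?n"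
  have "red_copy (length xs) (paren_edge xs) ?n (\<lambda>_ _. True) \<or> blue_triangle ?n (\<lambda>_ _. True)"
    using PR_least unfolding PR_def by blast
  then have "red_copy (length xs) (paren_edge xs) ?n (\<lambda>_ _. True)" unfolding blue_triangle_def by simp
  then obtain \<phi> where "strict_mono_on {1..length xs} \<phi>" "\<phi> ` {1..length xs} \<subseteq> {1..?n}"
    unfolding red_copy_def by blast
  then have "card {1..length xs} \<le> card {1..?n}"
    by (intro card_inj_on_le[of \<phi>]) (auto intro: strict_mono_on_imp_inj_on)
  then show False using \<open>\<not> length xs \<le> ?n\<close> by simp
qed

lemma emb_block:
  assumes nb: "\<not> blue_triangle N red" and le: "s + paren_ramsey xs \<le> N"
  shows "emb xs (Suc s) (s + paren_ramsey xs) red"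
proof -
  let ?n = "paren_ramsey xs"
  let ?r = "\<lambda>u v. red (u + s) (v + s)"
  have "\<not> blue_triangle ?n ?r"
  proof
    assume "blue_triangle ?n ?r"
    then obtain a b c where "1 \<le> a" "a < b" "b < c" "c \<le> ?n"
      "\<not> ?r a b" "\<not> ?r a c" "\<not> ?r b c" unfolding blue_triangle_def by blast
    then have "blue_triangle N red" unfolding blue_triangle_def using le
      by (intro exI[of _ "a + s"] exI[of _ "b + s"] exI[of _ "c + s"]) auto
    then show False using nb by simp
  qed
  then have "red_copy (length xs) (paren_edge xs) ?n ?r"
    using PR_least unfolding PR_def by blast
  then obtain \<phi> where \<phi>: "strict_mono_on {1..length xs} \<phi>" "\<phi> ` {1..length xs} \<subseteq> {1..?n}"
    "\<forall>u v. 1 \<le> u \<and> u < v \<and> v \<le> length xs \<and> paren_edge xs u v \<longrightarrow> ?r (\<phi> u) (\<phi> v)"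
    unfolding red_copy_def by blast
  define \<psi> where "\<psi> i = \<phi> i + s" for i
  have "strict_mono_on {1..length xs} \<psi>"
    unfolding \<psi>_def using \<phi>(1) by (auto simp: strict_mono_on_def)
  moreover have "\<psi> ` {1..length xs} \<subseteq> {Suc s..s + ?n}"
  proof
    fix z assume "z \<in> \<psi> ` {1..length xs}"
    then obtain i where i: "i \<in> {1..length xs}" "z = \<phi> i + s" unfolding \<psi>_def by blast
    then have "\<phi> i \<in> {1..?n}" using \<phi>(2) by blast
    then show "z \<in> {Suc s..s + ?n}" using i by auto
  qed
  moreover have "\<forall>u v. 1 \<le> u \<and> u < v \<and> v \<le> length xs \<and> paren_edge xs u v \<longrightarrow> red (\<psi> u) (\<psi> v)"
    unfolding \<psi>_def using \<phi>(3) by blast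
  ultimately show ?thesis unfolding emb_def by blast
qed



lemma greedy:
  fixes X :: "nat set"
  shows "finite X \<Longrightarrow> 1 + (\<Sum>j\<in>{i..<i+m}. g j) \<le> card X \<Longrightarrow>
    \<exists>x. (\<forall>j\<in>{i..i+m}. x j \<in> X) \<and> (\<forall>j\<in>{i..<i+m}. x j + g j \<le> x (Suc j))"
proof (induction m arbitrary: i X)
  case 0
  then have "X \<noteq> {}" by auto
  then obtain a where "a \<in> X" by blast
  then show ?case by (intro exI[of _ "\<lambda>_. a"]) auto
next
  case (Suc m)
  have ne: "X \<noteq> {}" using Suc.prems by auto
  define a0 where "a0 = Min X"
  have a0X: "a0 \<in> X" unfolding a0_def using Suc.prems ne by simp
  define X' where "X' = {y \<in> X. a0 + g i \<le> y}"
  have finX': "finite X'" using Suc.prems unfolding X'_def by simp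
  have "X - X' \<subseteq> {a0..<a0 + g i}"
    unfolding X'_def a0_def using Suc.prems by auto
  then have "card (X - X') \<le> g i"
    using card_mono[of "{a0..<a0 + g i}" "X - X'"] by simp
  moreover have "card X = card X' + card (X - X')"
    using Suc.prems(1) card_Diff_subset[of X' X] card_mono[of X X'] unfolding X'_def
    by (metis (no_types, lifting) Diff_subset card_Un_disjoint Diff_disjoint Un_Diff_cancel2 sup.absorb_iff2 mem_Collect_eq subsetI finite_subset Int_commute Un_commute)
  moreover have "(\<Sum>j\<in>{i..<i+Suc m}. g j) = g i + (\<Sum>j\<in>{Suc i..<Suc i+m}. g j)"
    by (simp add: sum.atLeast_Suc_lessThan)
  ultimately have "1 + (\<Sum>j\<in>{Suc i..<Suc i+m}. g j) \<le> card X'" using Suc.prems(2) by linarith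
  then obtain x' where x': "\<forall>j\<in>{Suc i..Suc i+m}. x' j \<in> X'"
    "\<forall>j\<in>{Suc i..<Suc i+m}. x' j + g j \<le> x' (Suc j)" using Suc.IH[OF finX'] by blast
  define x where "x = x'(i := a0)"
  have "\<forall>j\<in>{i..i+Suc m}. x j \<in> X"
  proof
    fix j assume j: "j \<in> {i..i+Suc m}"
    show "x j \<in> X"
    proof (cases "j = i")
      case True then show ?thesis using a0X unfolding x_def by simp
    next
      case False
      then have "j \<in> {Suc i..Suc i+m}" using j by auto
      then show ?thesis using x'(1) False unfolding x_def X'_def by auto
    qed
  qed
  moreover have "\<forall>j\<in>{i..<i+Suc m}. x j + g j \<le> x (Suc j)"
  proof
    fix j assume j: "j \<in> {i..<i+Suc m}"
    show "x j + g j \<le> x (Suc j)"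
    proof (cases "j = i")
      case True
      have "Suc i \<in> {Suc i..Suc i+m}" by simp
      then have "x' (Suc i) \<in> X'" using x'(1) by blast
      then show ?thesis using True unfolding x_def X'_def by simp
    next
      case False
      then have "j \<in> {Suc i..<Suc i+m}" using j by auto
      then show ?thesis using x'(2) False unfolding x_def by auto
    qed
  qed
  ultimately show ?case by blast
qed



lemma card_split_filter:
  assumes "finite S"
  shows "card {y \<in> S. P y} + card {y \<in> S. \<not> P y} = card S"
proof -
  have "S = {y \<in> S. P y} \<union> {y \<in> S. \<not> P y}" by auto
  moreover have "{y \<in> S. P y} \<inter> {y \<in> S. \<not> P y} = {}" by auto
  ultimately show ?thesis using assms card_Un_disjoint[of "{y \<in> S. P y}" "{y \<in> S. \<not> P y}"]
    by (metis (no_types, lifting) finite_Un)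
qed

lemma diag_count:
  fixes R :: "nat \<Rightarrow> nat \<Rightarrow> bool"
  assumes deg: "\<forall>x\<in>{1..A}. A + 1 \<le> card {y \<in> {A+T+1..A+T+A}. R x y} + b"
    and Adef: "A = b + 2 * G" and A1: "1 \<le> A"
  shows "\<exists>s. G + 1 \<le> card {x \<in> {1..A}. \<exists>y\<in>{A+T+1..A+T+A}. x + y = s \<and> R x y}"
proof (rule ccontr)
  assume neg: "\<not> ?thesis"
  have small: "\<forall>s. card {x \<in> {1..A}. \<exists>y\<in>{A+T+1..A+T+A}. x + y = s \<and> R x y} \<le> G"
  proof
    fix s
    have "\<not> G + 1 \<le> card {x \<in> {1..A}. \<exists>y\<in>{A+T+1..A+T+A}. x + y = s \<and> R x y}"
      using neg by blast
    then show "card {x \<in> {1..A}. \<exists>y\<in>{A+T+1..A+T+A}. x + y = s \<and> R x y} \<le> G" by simp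
  qed
  define X where "X s = {x \<in> {1..A}. \<exists>y\<in>{A+T+1..A+T+A}. x + y = s \<and> R x y}" for s
  define P where "P = Sigma {1..A} (\<lambda>x. {y \<in> {A+T+1..A+T+A}. R x y})"
  have "card P = (\<Sum>x\<in>{1..A}. card {y \<in> {A+T+1..A+T+A}. R x y})"
    unfolding P_def by (rule card_SigmaI) auto
  moreover have "(\<Sum>x\<in>{1..A}. card {y \<in> {A+T+1..A+T+A}. R x y}) \<ge> A * (2 * G + 1)"
  proof -
    have "\<forall>x\<in>{1..A}. 2 * G + 1 \<le> card {y \<in> {A+T+1..A+T+A}. R x y}"
    proof
      fix x assume "x \<in> {1..A}"
      then have "A + 1 \<le> card {y \<in> {A+T+1..A+T+A}. R x y} + b" using deg by blast
      then show "2 * G + 1 \<le> card {y \<in> {A+T+1..A+T+A}. R x y}" using Adef by linarith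
    qed
    then have "card {1..A} * (2 * G + 1) \<le> (\<Sum>x\<in>{1..A}. card {y \<in> {A+T+1..A+T+A}. R x y})"
      using sum_bounded_below[of "{1..A}" "2 * G + 1"] by simp
    then show ?thesis by simp
  qed
  ultimately have lower: "A * (2 * G + 1) \<le> card P" by simp
  have "P \<subseteq> (\<Union>s\<in>{A+T+2..3*A+T}. (\<lambda>x. (x, s - x)) ` X s)"
  proof
    fix p assume "p \<in> P"
    then obtain x y where p: "p = (x, y)" "x \<in> {1..A}" "y \<in> {A+T+1..A+T+A}" "R x y"
      unfolding P_def by blast
    then have "x \<in> X (x + y)" unfolding X_def by blast
    moreover have "x + y \<in> {A+T+2..3*A+T}" using p by auto
    moreover have "p = (\<lambda>x'. (x', (x + y) - x')) x" using p by simp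
    ultimately show "p \<in> (\<Union>s\<in>{A+T+2..3*A+T}. (\<lambda>x. (x, s - x)) ` X s)" by blast
  qed
  then have "card P \<le> card (\<Union>s\<in>{A+T+2..3*A+T}. (\<lambda>x. (x, s - x)) ` X s)"
    by (intro card_mono) (auto simp: X_def)
  also have "\<dots> \<le> (\<Sum>s\<in>{A+T+2..3*A+T}. card ((\<lambda>x. (x, s - x)) ` X s))"
    by (rule card_UN_le) simp
  also have "\<dots> \<le> (\<Sum>s\<in>{A+T+2..3*A+T}. card (X s))"
    by (intro sum_mono card_image_le) (simp add: X_def)
  also have "\<dots> \<le> card {A+T+2..3*A+T} * G"
    using sum_bounded_above[of "{A+T+2..3*A+T}" "\<lambda>s. card (X s)" G] small unfolding X_def by simp
  also have "\<dots> = (2 * A - 1) * G" by simp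
  also have "\<dots> \<le> 2 * A * G" by simp
  finally have "A * (2 * G + 1) \<le> 2 * A * G" using lower by linarith
  moreover have "A * (2 * G + 1) = 2 * A * G + A" by (simp add: algebra_simps)
  ultimately show False using A1 by linarith
qed

lemma gaps_bound:
  fixes n :: "nat \<Rightarrow> nat"
  assumes "1 \<le> k"
  shows "(\<Sum>j\<in>{1..<k}. n j + n (2 * k - j)) \<le> (\<Sum>i\<in>{1..2*k-1} - {k}. n i)"
proof -
  let ?f = "\<lambda>j. 2 * k - j"
  have inj: "inj_on ?f {1..<k}" by (auto simp: inj_on_def)
  have "(\<Sum>j\<in>{1..<k}. n (2 * k - j)) = (\<Sum>i\<in>?f ` {1..<k}. n i)"
    using sum.reindex[OF inj, of n] by simp
  moreover have "?f ` {1..<k} \<subseteq> {k+1..2*k-1}" by auto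
  moreover have disj: "{1..<k} \<inter> ?f ` {1..<k} = {}" by auto
  ultimately have "(\<Sum>j\<in>{1..<k}. n j + n (2 * k - j)) = (\<Sum>i\<in>{1..<k} \<union> ?f ` {1..<k}. n i)"
    by (simp add: sum.distrib sum.union_disjoint)
  also have "\<dots> \<le> (\<Sum>i\<in>{1..2*k-1} - {k}. n i)"
    by (rule sum_mono2) auto
  finally show ?thesis .
qed

lemma nest_bal:
  assumes bal: "\<forall>i\<in>{1..2*k-1}. balanced (A i)"
  shows "d < k \<Longrightarrow> balanced (nest A k d)"
proof (induction d)
  case 0
  then have "balanced (A k)" using bal by auto
  then show ?case by (simp add: bal_wrap[simplified])
next
  case (Suc d)
  have "k - Suc d \<in> {1..2*k-1}" "k + Suc d \<in> {1..2*k-1}" using Suc.prems by auto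
  then have "balanced (A (k - Suc d))" "balanced (A (k + Suc d))" using bal by blast+
  moreover have "balanced (nest A k d)" using Suc by simp
  ultimately have "balanced (True # (A (k - Suc d) @ nest A k d @ A (k + Suc d)) @ [False])"
    by (intro bal_wrap bal_append)
  then show ?case by simp
qed

lemma nest_len:
  "d < k \<Longrightarrow> length (nest A k d) = 2 * (d + 1) + (\<Sum>i\<in>{k-d..k+d}. length (A i))"
proof (induction d)
  case 0
  then show ?case by simp
next
  case (Suc d)
  have eq: "{k - Suc d..k + Suc d} = insert (k - Suc d) (insert (k + Suc d) {k-d..k+d})"
    using Suc.prems by auto
  have "k - Suc d \<notin> insert (k + Suc d) {k-d..k+d}" using Suc.prems by auto
  moreover have "k + Suc d \<notin> {k-d..k+d}" by auto
  ultimately have "(\<Sum>i\<in>{k - Suc d..k + Suc d}. length (A i)) =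
      length (A (k - Suc d)) + length (A (k + Suc d)) + (\<Sum>i\<in>{k-d..k+d}. length (A i))"
    unfolding eq by simp
  then show ?case using Suc by simp
qed



lemma nest_emb:
  assumes bal: "\<forall>i\<in>{1..2*k-1}. balanced (A i)"
    and nb: "\<not> blue_triangle N red"
    and xy: "\<forall>j\<in>{1..k}. 1 \<le> x j \<and> x j \<le> A0 \<and> A0 + t < y j \<and> y j \<le> N \<and> red (x j) (y j)"
    and gxy: "\<forall>j\<in>{1..<k}. x j + g j \<le> x (Suc j) \<and> y (Suc j) + g j \<le> y j"
    and gdef: "\<forall>j. g j = 1 + paren_ramsey (A j) + paren_ramsey (A (2*k - j))"
    and tdef: "t = paren_ramsey (A k)" and tN: "A0 + t \<le> N"
  shows "d < k \<Longrightarrow> emb (nest A k d) (x (k - d)) (y (k - d)) red"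
proof (induction d)
  case 0
  have kk: "k \<in> {1..k}" "k \<in> {1..2*k-1}" using 0 by auto
  have bk: "balanced (A k)" using bal kk by blast
  have e: "emb (A k) (Suc A0) (A0 + t) red"
    using emb_block[OF nb, of A0 "A k"] tdef tN by simp
  have xk: "1 \<le> x k \<and> x k \<le> A0 \<and> A0 + t < y k \<and> y k \<le> N \<and> red (x k) (y k)"
    using xy kk(1) by blast
  then have "x k < Suc A0" "A0 + t < y k" "x k < y k" "red (x k) (y k)" by auto
  then have "emb (True # A k @ [False]) (x k) (y k) red"
    by (intro emb_wrap[OF bk e]) auto
  then show ?case by simp
next
  case (Suc d)
  define j where "j = k - Suc d"
  have j1: "1 \<le> j" "j < k" "Suc j = k - d" "k + Suc d = 2 * k - j" "k - Suc d = j"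
    using Suc.prems unfolding j_def by auto
  have IH: "emb (nest A k d) (x (Suc j)) (y (Suc j)) red" using Suc j1 by simp
  have jr: "j \<in> {1..2*k-1}" "2*k - j \<in> {1..2*k-1}" "j \<in> {1..k}" "Suc j \<in> {1..k}" "j \<in> {1..<k}"
    using j1 by auto
  have bj: "balanced (A j)" "balanced (A (2*k - j))" using bal jr by blast+
  have bn: "balanced (nest A k d)" using nest_bal[OF bal] Suc.prems by simp
  let ?nj = "paren_ramsey (A j)" and ?nr = "paren_ramsey (A (2*k - j))"
  have g: "x j + (1 + ?nj + ?nr) \<le> x (Suc j)" "y (Suc j) + (1 + ?nj + ?nr) \<le> y j"
    using gxy gdef jr(5) by auto
  have "1 \<le> x j \<and> x j \<le> A0 \<and> A0 + t < y j \<and> y j \<le> N \<and> red (x j) (y j)"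
    using xy jr(3) by blast
  then have xyj: "1 \<le> x j" "x j \<le> A0" "A0 + t < y j" "y j \<le> N" "red (x j) (y j)" by auto
  have "1 \<le> x (Suc j) \<and> x (Suc j) \<le> A0 \<and> A0 + t < y (Suc j) \<and> y (Suc j) \<le> N \<and> red (x (Suc j)) (y (Suc j))"
    using xy jr(4) by blast
  then have xyj': "1 \<le> x (Suc j)" "x (Suc j) \<le> A0" "A0 + t < y (Suc j)" "y (Suc j) \<le> N" by auto
  have e1: "emb (A j) (Suc (x j)) (x j + ?nj) red"
    using emb_block[OF nb, of "x j" "A j"] g xyj' xyj tN by simp
  have e3: "emb (A (2*k - j)) (Suc (y (Suc j))) (y (Suc j) + ?nr) red"
    using emb_block[OF nb, of "y (Suc j)" "A (2*k - j)"] g xyj by simp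
  have c1: "emb (nest A k d @ A (2*k - j)) (x (Suc j)) (y (Suc j) + ?nr) red"
    using xyj' by (intro emb_concat[OF bn bj(2) IH e3]) auto
  have c2: "emb (A j @ nest A k d @ A (2*k - j)) (Suc (x j)) (y (Suc j) + ?nr) red"
    using g xyj' by (intro emb_concat[OF bj(1) bal_append[OF bn bj(2)] e1 c1]) auto
  have w: "emb (True # (A j @ nest A k d @ A (2*k - j)) @ [False]) (x j) (y j) red"
    using g xyj xyj' by (intro emb_wrap[OF bal_append[OF bj(1) bal_append[OF bn bj(2)]] c2]) auto
  have "nest A k (Suc d) = True # (A j @ nest A k d @ A (2*k - j)) @ [False]"
    using j1 by simp
  then show ?case using w j1 by simp
qed



theorem lemma2p4:
  fixes k :: nat and A :: "nat \<Rightarrow> bool list"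
  assumes "k \<ge> 1"
    and "\<forall>i \<in> {1..2*k-1}. balanced (A i)"
  shows "paren_ramsey (nest A k (k - 1))
    \<le> paren_ramsey (A k)
       + 20 * (k + (\<Sum>i \<in> {1..2*k-1} - {k}. paren_ramsey (A i)) + length (A k))"
proof -
  note k1 = assms(1) and bal = assms(2)
  define n where "n i = paren_ramsey (A i)" for i
  define t where "t = n k"
  define l where "l = (\<Sum>i \<in> {1..2*k-1} - {k}. n i)"
  define B1 where "B1 = nest A k (k - 1)"
  define b where "b = length B1"
  define G where "G = k + l"
  define A0 where "A0 = b + 2 * G"
  define N0 where "N0 = A0 + t + A0"
  define g where "g j = 1 + n j + n (2 * k - j)" for j
  have blen: "b = 2 * k + (\<Sum>i\<in>{1..2*k-1}. length (A i))"
  proof -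
    have e1: "k - (k - 1) = 1" "k + (k - 1) = 2 * k - 1" "2 * (k - 1 + 1) = 2 * k" using k1 by auto
    have "length B1 = 2 * (k - 1 + 1) + (\<Sum>i\<in>{k-(k-1)..k+(k-1)}. length (A i))"
      unfolding B1_def using nest_len[of "k - 1" k A] k1 by simp
    then have "length B1 = 2 * k + (\<Sum>i\<in>{1..2*k-1}. length (A i))" by (simp only: e1)
    then show ?thesis unfolding b_def .
  qed
  have "(\<Sum>i\<in>{1..2*k-1}. length (A i)) = length (A k) + (\<Sum>i\<in>{1..2*k-1} - {k}. length (A i))"
    using k1 by (intro sum.remove) auto
  moreover have "(\<Sum>i\<in>{1..2*k-1} - {k}. length (A i)) \<le> l"
    unfolding l_def n_def by (intro sum_mono len_le_pr)
  ultimately have bbound: "b \<le> 2 * k + length (A k) + l" using blen by linarith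
  have N0bound: "N0 \<le> t + 20 * (k + l + length (A k))"
  proof -
    have "20 * (k + l + length (A k)) = 20 * k + 20 * l + 20 * length (A k)" by simp
    moreover have "N0 = 2 * b + 4 * k + 4 * l + t" unfolding N0_def A0_def G_def by simp
    ultimately show ?thesis using bbound by linarith
  qed
  have b1: "2 \<le> b" using blen k1 by simp
  have "PR B1 N0"
    unfolding PR_def
  proof (intro allI)
    fix red
    show "red_copy (length B1) (paren_edge B1) N0 red \<or> blue_triangle N0 red"
    proof (cases "blue_triangle N0 red")
      case True then show ?thesis by simp
    next
      case False
      note nb = False
      let ?Rz = "{A0+t+1..A0+t+A0}"
      show ?thesis
      proof (cases "\<exists>x\<in>{1..A0}. b \<le> card {y \<in> ?Rz. \<not> red x y}")
        case True
        then obtain x where x: "x \<in> {1..A0}" "b \<le> card {y \<in> ?Rz. \<not> red x y}" by blast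
        let ?K = "{y \<in> ?Rz. \<not> red x y}"
        have "\<forall>u\<in>?K. \<forall>v\<in>?K. u < v \<longrightarrow> red u v"
        proof (intro ballI impI)
          fix u v assume u: "u \<in> ?K" and v: "v \<in> ?K" and uv: "u < v"
          show "red u v"
          proof (rule ccontr)
            assume "\<not> red u v"
            moreover have "1 \<le> x" "x < u" "v \<le> N0" "\<not> red x u" "\<not> red x v"
              using x u v unfolding N0_def by auto
            ultimately have "blue_triangle N0 red" using uv unfolding blue_triangle_def
              by (intro exI[of _ x] exI[of _ u] exI[of _ v]) simp
            then show False using nb by simp
          qed
        qed
        moreover have "?K \<subseteq> {1..N0}" unfolding N0_def by auto
        ultimately have "red_copy (length B1) (paren_edge B1) N0 red"
          using x(2) unfolding b_def by (intro red_copy_clique[of ?K]) auto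
        then show ?thesis by simp
      next
        case False
        have deg: "\<forall>x\<in>{1..A0}. A0 + 1 \<le> card {y \<in> ?Rz. red x y} + b"
        proof
          fix x assume "x \<in> {1..A0}"
          then have "\<not> b \<le> card {y \<in> ?Rz. \<not> red x y}" using False by blast
          then have "card {y \<in> ?Rz. \<not> red x y} < b" by simp
          moreover have "card {y \<in> ?Rz. red x y} + card {y \<in> ?Rz. \<not> red x y} = A0"
            using card_split_filter[of ?Rz "red x"] by simp
          ultimately show "A0 + 1 \<le> card {y \<in> ?Rz. red x y} + b" by linarith
        qed
        obtain s where s: "G + 1 \<le> card {x \<in> {1..A0}. \<exists>y\<in>?Rz. x + y = s \<and> red x y}"
          using diag_count[OF deg A0_def] b1 unfolding A0_def by auto
        let ?X = "{x \<in> {1..A0}. \<exists>y\<in>?Rz. x + y = s \<and> red x y}"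
        have "(\<Sum>j\<in>{1..<k}. g j) = (\<Sum>j\<in>{1..<k}. (1::nat)) + (\<Sum>j\<in>{1..<k}. n j + n (2 * k - j))"
          unfolding g_def by (simp only: add.assoc sum.distrib)
        then have "(\<Sum>j\<in>{1..<k}. g j) = (k - 1) + (\<Sum>j\<in>{1..<k}. n j + n (2 * k - j))"
          by simp
        moreover have "(\<Sum>j\<in>{1..<k}. n j + n (2 * k - j)) \<le> l"
          unfolding l_def using gaps_bound[OF k1] by simp
        ultimately have "1 + (\<Sum>j\<in>{1..<1 + (k - 1)}. g j) \<le> card ?X"
          using s k1 unfolding G_def by simp
        then obtain x where x: "\<forall>j\<in>{1..1 + (k - 1)}. x j \<in> ?X"
          "\<forall>j\<in>{1..<1 + (k - 1)}. x j + g j \<le> x (Suc j)"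
          using greedy[where X="?X" and i=1 and m="k - 1" and g=g] by auto
        define y where "y j = s - x j" for j
        have xy: "\<forall>j\<in>{1..k}. 1 \<le> x j \<and> x j \<le> A0 \<and> A0 + t < y j \<and> y j \<le> N0 \<and> red (x j) (y j)"
        proof
          fix j assume "j \<in> {1..k}"
          then have "x j \<in> ?X" using x(1) k1 by auto
          then obtain z where z: "x j \<in> {1..A0}" "z \<in> ?Rz" "x j + z = s" "red (x j) z" by blast
          then have "y j = z" unfolding y_def by simp
          then show "1 \<le> x j \<and> x j \<le> A0 \<and> A0 + t < y j \<and> y j \<le> N0 \<and> red (x j) (y j)"
            using z unfolding N0_def by auto
        qed
        have xs: "\<forall>j\<in>{1..k}. x j \<le> s"
        proof
          fix j assume "j \<in> {1..k}"
          then have "x j \<in> ?X" using x(1) k1 by auto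
          then show "x j \<le> s" by auto
        qed
        have gxy: "\<forall>j\<in>{1..<k}. x j + g j \<le> x (Suc j) \<and> y (Suc j) + g j \<le> y j"
        proof
          fix j assume j: "j \<in> {1..<k}"
          then have a: "x j + g j \<le> x (Suc j)" using x(2) k1 by auto
          moreover have "x (Suc j) \<le> s" using xs j by auto
          ultimately have "y (Suc j) + g j \<le> y j" unfolding y_def by linarith
          then show "x j + g j \<le> x (Suc j) \<and> y (Suc j) + g j \<le> y j" using a by simp
        qed
        have gd: "\<forall>j. g j = 1 + paren_ramsey (A j) + paren_ramsey (A (2*k - j))"
          unfolding g_def n_def by simp
        have td: "t = paren_ramsey (A k)" unfolding t_def n_def ..
        have tN: "A0 + t \<le> N0" unfolding N0_def by simp
        have "k - 1 < k" using k1 by simp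
        then have "emb (nest A k (k - 1)) (x (k - (k - 1))) (y (k - (k - 1))) red"
          by (rule nest_emb[OF bal nb xy gxy gd td tN])
        then have "emb B1 (x 1) (y 1) red" unfolding B1_def using k1 by simp
        moreover have "1 \<le> x 1" "y 1 \<le> N0" using xy k1 by auto
        ultimately have "emb B1 1 N0 red" by (rule emb_mono)
        then show ?thesis using emb_red_copy by simp
      qed
    qed
  qed
  then have "paren_ramsey B1 \<le> N0" by (rule PR_le)
  then show ?thesis using N0bound unfolding B1_def t_def l_def n_def by simp
qed

end
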